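(* Let $\mathcal Z_{\mathcal S}=(X,(\phi_j)_{j=0}^{n-1},(\rho_j)_{j=0}^{n-1})$ be a Matkowski contractive GIFZS of degree $m$ on a metric space $X$, and let $\varphi_j$ be a witness for $\phi_j$, $j=0,\dots,n-1$. Then the operator $\mathcal Z_{\mathcal S}:(\mathcal F_X^* )^m\to\mathcal F_X^*$ is a generalized Matkowski contraction (with respect to $d_\infty^m$ and $d_\infty$) with witness $\varphi=\max_j\varphi_j$, i.e. $d_\infty(\mathcal Z_{\mathcal S}(u_0,\dots,u_{m-1}),\mathcal Z_{\mathcal S}(v_0,\dots,v_{m-1}))\le\varphi(\max_i d_\infty(u_i,v_i))$. In particular, if $\mathcal Z_{\mathcal S}$ is Lipschitz contractive, then the operator $\mathcal Z_{\mathcal S}$ is Lipschitz with constant at most $\max_j\mathrm{Lip}(\phi_j)<1$.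
   Context: A fuzzy subset of $X$ is $u:X\to[0,1]$. For $\alpha\in(0,1]$, $[u]^\alpha=\{x:u(x)\ge\alpha\}$, $[u]^0=\overline{\{x:u(x)>0\}}$. $\mathcal F_X^*$: fuzzy subsets that are normal ($u(x)=1$ for some $x$), usc, compactly supported ($[u]^0$ compact). $h$: Hausdorff metric; $d_\infty(u,v)=\sup_{\alpha\in[0,1]}h([u]^\alpha,[v]^\alpha)$; $d_\infty^m((u_i),(v_i))=\max_i d_\infty(u_i,v_i)$. $X^m$ carries the maximum metric $d^m$. For $T:Z\to Y$, $T(u)(y)=\sup\{u(z):T(z)=y\}$ if $y\in T(Z)$, else $0$; $\rho(u)=\rho\circ u$; $(u_0\times\cdots\times u_{m-1})(x_0,\dots,x_{m-1})=\min_iu_i(x_i)$; $\vee$ is pointwise max. A grey level map is a non-identically-zero $\rho:[0,1]\to[0,1]$; a family $(\rho_j)_{j=0}^{n-1}$ is admissible if each $\rho_j$ is nondecreasing and right continuous, $\rho_j(0)=0$ for all $j$, and $\rho_j(1)=1$ for some $j$. A map $f:M^m\to M$ (or between metric spaces) is a generalized Matkowski contraction if there is a nondecreasing $\varphi:[0,\infty)\to[0,\infty)$ with $\varphi^{(k)}(t)\to0$ for every $t>0$ ($k$-th iterate) such that $d(f(x),f(y))\le\varphi(d^m(x,y))$; $\varphi$ is a witness. A GIFS of degree $m$ is $\mathcal S=(X,(\phi_j)_{j=0}^{n-1})$ with continuous $\phi_j:X^m\to X$; a GIFZS of degree $m$ is $(X,(\phi_j),(\rho_j))$ with $(X,(\phi_j))$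 a GIFS of degree $m$ and $(\rho_j)$ admissible; it is Matkowski (resp. Lipschitz) contractive if every $\phi_j$ is a generalized Matkowski contraction (resp. $\mathrm{Lip}(\phi_j)<1$). Its operator is $\mathcal Z_{\mathcal S}(u_0,\dots,u_{m-1})=\bigvee_j\rho_j(\phi_j(u_0\times\cdots\times u_{m-1}))$. *)

theory Defs
  imports "HOL-Analysis.Analysis"
begin

definition hausdorff_dist :: "'a::metric_space set \<Rightarrow> 'a set \<Rightarrow> real" where
  "hausdorff_dist A B = max (SUP a\<in>A. infdist a B) (SUP b\<in>B. infdist b A)"

definition alpha_cut :: "('a::topological_space \<Rightarrow> real) \<Rightarrow> real \<Rightarrow> 'a set" where
  "alpha_cut u \<alpha> = (if \<alpha> = 0 then closure {x. u x > 0} else {x. \<alpha> \<le> u x})"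

definition fuzzy_set :: "('a \<Rightarrow> real) \<Rightarrow> bool" where
  "fuzzy_set u \<longleftrightarrow> (\<forall>x. 0 \<le> u x \<and> u x \<le> 1)"

definition usc :: "('a::topological_space \<Rightarrow> real) \<Rightarrow> bool" where
  "usc u \<longleftrightarrow> (\<forall>a. closed {x. a \<le> u x})"

definition FX_star :: "('a::metric_space \<Rightarrow> real) set" where
  "FX_star = {u. fuzzy_set u \<and> (\<exists>x. u x = 1) \<and> usc u \<and> compact (alpha_cut u 0)}"

definition d_inf :: "('a::metric_space \<Rightarrow> real) \<Rightarrow> ('a \<Rightarrow> real) \<Rightarrow> real" where
  "d_inf u v = (SUP \<alpha>\<in>{0..1}. hausdorff_dist (alpha_cut u \<alpha>) (alpha_cut v \<alpha>))"

(* X^m is modelled as 'm \<Rightarrow> 'a with a finite index type 'm of cardinality m *)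
definition d_m :: "('m::finite \<Rightarrow> 'a::metric_space) \<Rightarrow> ('m \<Rightarrow> 'a) \<Rightarrow> real" where
  "d_m x y = Max (range (\<lambda>i. dist (x i) (y i)))"

definition d_inf_m :: "('m::finite \<Rightarrow> 'a::metric_space \<Rightarrow> real) \<Rightarrow> ('m \<Rightarrow> 'a \<Rightarrow> real) \<Rightarrow> real" where
  "d_inf_m u v = Max (range (\<lambda>i. d_inf (u i) (v i)))"

definition cont_m :: "(('m::finite \<Rightarrow> 'a::metric_space) \<Rightarrow> 'a) \<Rightarrow> bool" where
  "cont_m f \<longleftrightarrow> (\<forall>x. \<forall>e>0. \<exists>d>0. \<forall>y. d_m x y < d \<longrightarrow> dist (f x) (f y) < e)"

definition matkowski_fun :: "(real \<Rightarrow> real) \<Rightarrow> bool" where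
  "matkowski_fun \<phi> \<longleftrightarrow> mono_on {0..} \<phi> \<and> (\<forall>t\<ge>0. 0 \<le> \<phi> t) \<and>
     (\<forall>t>0. (\<lambda>k. (\<phi> ^^ k) t) \<longlonglongrightarrow> 0)"

definition matkowski_witness_m :: "(real \<Rightarrow> real) \<Rightarrow> (('m::finite \<Rightarrow> 'a::metric_space) \<Rightarrow> 'a) \<Rightarrow> bool" where
  "matkowski_witness_m \<phi> f \<longleftrightarrow> matkowski_fun \<phi> \<and> (\<forall>x y. dist (f x) (f y) \<le> \<phi> (d_m x y))"

definition lipschitz_m :: "(('m::finite \<Rightarrow> 'a::metric_space) \<Rightarrow> 'a) \<Rightarrow> bool" where
  "lipschitz_m f \<longleftrightarrow> (\<exists>L\<ge>0. \<forall>x y. dist (f x) (f y) \<le> L * d_m x y)"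

definition Lip_m :: "(('m::finite \<Rightarrow> 'a::metric_space) \<Rightarrow> 'a) \<Rightarrow> real" where
  "Lip_m f = Inf {L. 0 \<le> L \<and> (\<forall>x y. dist (f x) (f y) \<le> L * d_m x y)}"

definition admissible :: "nat \<Rightarrow> (nat \<Rightarrow> real \<Rightarrow> real) \<Rightarrow> bool" where
  "admissible n \<rho> \<longleftrightarrow>
     (\<forall>j<n. (\<forall>t\<in>{0..1}. 0 \<le> \<rho> j t \<and> \<rho> j t \<le> 1) \<and> (\<exists>t\<in>{0..1}. \<rho> j t \<noteq> 0)
        \<and> mono_on {0..1} (\<rho> j)
        \<and> (\<forall>t\<in>{0..<1}. (\<rho> j \<longlongrightarrow> \<rho> j t) (at_right t))
        \<and> \<rho> j 0 = 0)
     \<and> (\<exists>j<n. \<rho> j 1 = 1)"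

definition zadeh_ext :: "('z \<Rightarrow> 'y) \<Rightarrow> ('z \<Rightarrow> real) \<Rightarrow> 'y \<Rightarrow> real" where
  "zadeh_ext T u y = (if y \<in> range T then Sup {u z | z. T z = y} else 0)"

definition fuzzy_prod :: "('m::finite \<Rightarrow> 'a \<Rightarrow> real) \<Rightarrow> ('m \<Rightarrow> 'a) \<Rightarrow> real" where
  "fuzzy_prod u x = Min (range (\<lambda>i. u i (x i)))"

definition gifzs_op :: "nat \<Rightarrow> (nat \<Rightarrow> ('m::finite \<Rightarrow> 'a) \<Rightarrow> 'a) \<Rightarrow> (nat \<Rightarrow> real \<Rightarrow> real)
    \<Rightarrow> ('m \<Rightarrow> 'a \<Rightarrow> real) \<Rightarrow> 'a \<Rightarrow> real" where
  "gifzs_op n \<phi> \<rho> u y = Max ((\<lambda>j. \<rho> j (zadeh_ext (\<phi> j) (fuzzy_prod u) y)) ` {..<n})"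

end

theory Submission
  imports Defs
begin


lemma subseq_prod_aux:
  fixes x :: "nat \<Rightarrow> 'm \<Rightarrow> 'a::metric_space"
  assumes K: "\<And>i. compact (K i)" and x: "\<And>k i. x k i \<in> K i" and fin: "finite I"
  shows "\<exists>r l. strict_mono r \<and> (\<forall>i\<in>I. l i \<in> K i \<and> ((\<lambda>k. x (r k) i) \<longlonglongrightarrow> l i))"
  using fin
proof (induction I rule: finite_induct)
  case empty
  show ?case by (rule exI[of _ id], auto simp: strict_mono_def)
next
  case (insert i I)
  then obtain r l where r: "strict_mono r" and l: "\<forall>j\<in>I. l j \<in> K j \<and> ((\<lambda>k. x (r k) j) \<longlonglongrightarrow> l j)"
    by blast
  have "seq_compact (K i)" using K compact_eq_seq_compact_metric by blast
  then obtain l' r' where l': "l' \<in> K i" and r': "strict_mono r'"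
      and lim: "((\<lambda>k. x (r k) i) \<circ> r') \<longlonglongrightarrow> l'"
    unfolding seq_compact_def using x by metis
  show ?case
  proof (intro exI conjI ballI)
    show "strict_mono (r \<circ> r')" using r r' strict_mono_o by blast
    fix j assume j: "j \<in> insert i I"
    show "(l(i := l')) j \<in> K j" using j l l' by auto
    show "(\<lambda>k. x ((r \<circ> r') k) j) \<longlonglongrightarrow> (l(i := l')) j"
    proof (cases "j = i")
      case True thus ?thesis using lim by (simp add: o_def)
    next
      case False
      hence "(\<lambda>k. x (r k) j) \<longlonglongrightarrow> l j" using j l by auto
      from LIMSEQ_subseq_LIMSEQ[OF this r'] show ?thesis using False by (simp add: o_def)
    qed
  qed
qed

lemma subseq_prod:
  fixes x :: "nat \<Rightarrow> 'm::finite \<Rightarrow> 'a::metric_space"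
  assumes K: "\<forall>i. compact (K i)" and x: "\<forall>k i. x k i \<in> K i"
  shows "\<exists>r l. strict_mono r \<and> (\<forall>i. l i \<in> K i \<and> ((\<lambda>k. x (r k) i) \<longlonglongrightarrow> l i))"
proof -
  have "\<exists>r l. strict_mono r \<and> (\<forall>i\<in>UNIV. l i \<in> K i \<and> ((\<lambda>k. x (r k) i) \<longlonglongrightarrow> l i))"
    by (rule subseq_prod_aux[of K x UNIV]) (use K x in auto)
  thus ?thesis by simp
qed

lemma d_m_nonneg: "0 \<le> d_m x y"
proof -
  have "dist (x undefined) (y undefined) \<le> Max (range (\<lambda>i. dist (x i) (y i)))" by (rule Max_ge) auto
  moreover have "0 \<le> dist (x undefined) (y undefined)" by simp
  ultimately show ?thesis unfolding d_m_def by linarith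
qed

lemma d_m_le: "d_m x y \<le> D \<longleftrightarrow> (\<forall>i. dist (x i) (y i) \<le> D)"
  unfolding d_m_def by (subst Max_le_iff) auto

lemma cont_m_lim:
  fixes z :: "nat \<Rightarrow> 'm::finite \<Rightarrow> 'a::metric_space"
  assumes f: "cont_m f" and z: "\<And>i. (\<lambda>k. z k i) \<longlonglongrightarrow> l i"
  shows "(\<lambda>k. f (z k)) \<longlonglongrightarrow> f l"
proof (rule tendstoI)
  fix e :: real assume e: "e > 0"
  then obtain d where d: "d > 0" and H: "\<And>y. d_m l y < d \<Longrightarrow> dist (f l) (f y) < e"
    using f unfolding cont_m_def by blast
  have "\<forall>\<^sub>F k in sequentially. \<forall>i. dist (z k i) (l i) < d"
    by (rule eventually_all_finite) (use z d tendstoD in blast)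
  thus "\<forall>\<^sub>F k in sequentially. dist (f (z k)) (f l) < e"
  proof eventually_elim
    case (elim k)
    have "d_m l (z k) < d" unfolding d_m_def
      by (subst Max_less_iff) (use elim in \<open>auto simp: dist_commute\<close>)
    from H[OF this] show ?case by (metis dist_commute)
  qed
qed

lemma compact_img:
  fixes f :: "('m::finite \<Rightarrow> 'a::metric_space) \<Rightarrow> 'a"
  assumes f: "cont_m f" and K: "\<And>i. compact (K i)"
  shows "compact (f ` {x. \<forall>i. x i \<in> K i})"
  unfolding compact_eq_seq_compact_metric seq_compact_def
proof (intro allI impI)
  fix s :: "nat \<Rightarrow> 'a" assume s: "\<forall>n. s n \<in> f ` {x. \<forall>i. x i \<in> K i}"
  hence "\<forall>k. \<exists>z. (\<forall>i. z i \<in> K i) \<and> s k = f z" by (auto simp: image_iff)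
  then obtain x :: "nat \<Rightarrow> 'm \<Rightarrow> 'a" where xx: "\<forall>k. (\<forall>i. x k i \<in> K i) \<and> s k = f (x k)"
    using choice[of "\<lambda>k z. (\<forall>i. z i \<in> K i) \<and> s k = f z"] by blast
  hence x: "\<And>k i. x k i \<in> K i" and sx: "\<And>k. s k = f (x k)" by auto
  obtain r l where r: "strict_mono r" and l: "\<And>i. l i \<in> K i" "\<And>i. (\<lambda>k. x (r k) i) \<longlonglongrightarrow> l i"
    using subseq_prod[of K x] K x by blast
  have "(\<lambda>k. f (x (r k))) \<longlonglongrightarrow> f l" by (rule cont_m_lim[OF f l(2)])
  thus "\<exists>l\<in>f ` {x. \<forall>i. x i \<in> K i}. \<exists>r. strict_mono r \<and> (s \<circ> r) \<longlonglongrightarrow> l"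
    using r l(1) by (auto simp: o_def sx)
qed



lemma FX_D:
  assumes "u \<in> FX_star"
  shows "\<And>x. 0 \<le> u x" "\<And>x. u x \<le> 1" "\<exists>x. u x = 1" "\<And>a. closed {x. a \<le> u x}"
    "compact (alpha_cut u 0)"
  using assms unfolding FX_star_def fuzzy_set_def usc_def by auto

lemma cut_pos: "\<alpha> \<noteq> 0 \<Longrightarrow> alpha_cut u \<alpha> = {x. \<alpha> \<le> u x}"
  unfolding alpha_cut_def by simp

lemma in_supp: "0 < u x \<Longrightarrow> x \<in> alpha_cut u 0"
  unfolding alpha_cut_def by (meson closure_subset mem_Collect_eq subsetD)

lemma cut_sub:
  assumes "0 < \<alpha>" shows "alpha_cut u \<alpha> \<subseteq> alpha_cut u 0"
proof
  fix x assume "x \<in> alpha_cut u \<alpha>"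
  hence "x \<in> {x. u x > 0}" using assms by (auto simp: cut_pos)
  thus "x \<in> alpha_cut u 0" using in_supp by auto
qed

lemma cut_compact:
  assumes u: "u \<in> FX_star" and a: "0 \<le> \<alpha>"
  shows "compact (alpha_cut u \<alpha>)"
proof (cases "\<alpha> = 0")
  case True thus ?thesis using FX_D(5)[OF u] by simp
next
  case False
  hence "alpha_cut u \<alpha> = alpha_cut u 0 \<inter> {x. \<alpha> \<le> u x}"
    using cut_sub[of \<alpha> u] a by (auto simp: cut_pos)
  thus ?thesis using compact_Int_closed[OF FX_D(5)[OF u] FX_D(4)[OF u]] by simp
qed

lemma cut_nonempty:
  assumes u: "u \<in> FX_star" and a: "0 \<le> \<alpha>" "\<alpha> \<le> 1"
  shows "alpha_cut u \<alpha> \<noteq> {}"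
proof -
  obtain x where x: "u x = 1" using FX_D(3)[OF u] by blast
  have "x \<in> alpha_cut u \<alpha>"
  proof (cases "\<alpha> = 0")
    case True thus ?thesis using x in_supp[of u x] by simp
  next
    case False thus ?thesis using x a by (auto simp: cut_pos)
  qed
  thus ?thesis by blast
qed

lemma prod_ge: "b \<le> fuzzy_prod u x \<longleftrightarrow> (\<forall>i. b \<le> u i (x i))"
  unfolding fuzzy_prod_def by (subst Min_ge_iff) auto

lemma prod_le: "fuzzy_prod u x \<le> u i (x i)"
  unfolding fuzzy_prod_def by (rule Min_le) auto

lemma prod_bounds:
  assumes "\<forall>i. u i \<in> FX_star"
  shows "0 \<le> fuzzy_prod u x" "fuzzy_prod u x \<le> 1"
  using assms FX_D(1,2) prod_ge prod_le order_trans by metis+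

lemma zadeh_bounds:
  assumes "\<And>x. 0 \<le> P x" "\<And>x. P x \<le> 1"
  shows "0 \<le> zadeh_ext f P y" "zadeh_ext f P y \<le> 1"
proof -
  have "0 \<le> zadeh_ext f P y \<and> zadeh_ext f P y \<le> 1"
  proof (cases "y \<in> range f")
    case True
    then obtain x where x: "f x = y" by auto
    have ne: "{P z | z. f z = y} \<noteq> {}" using x by auto
    have "0 \<le> Sup {P z | z. f z = y}"
      using x assms by (intro order_trans[OF _ cSup_upper[of "P x"]]) (auto intro!: bdd_aboveI[of _ 1])
    moreover have "Sup {P z | z. f z = y} \<le> 1"
      using ne assms by (intro cSup_least) auto
    ultimately show ?thesis using True unfolding zadeh_ext_def by simp
  next
    case False thus ?thesis unfolding zadeh_ext_def by simp
  qed
  thus "0 \<le> zadeh_ext f P y" "zadeh_ext f P y \<le> 1" by auto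
qed

lemma zadeh_upper:
  assumes "\<And>x. P x \<le> 1" "f x = y"
  shows "P x \<le> zadeh_ext f P y"
proof -
  have "y \<in> range f" using assms by auto
  thus ?thesis unfolding zadeh_ext_def using assms
    by (auto intro!: cSup_upper bdd_aboveI[of _ 1])
qed

lemma zadeh_attain:
  fixes f :: "('m::finite \<Rightarrow> 'a::metric_space) \<Rightarrow> 'a"
  assumes u: "\<forall>i. u i \<in> FX_star" and f: "cont_m f"
    and pos: "0 < zadeh_ext f (fuzzy_prod u) y"
  shows "\<exists>x. f x = y \<and> fuzzy_prod u x = zadeh_ext f (fuzzy_prod u) y"
proof -
  define t where "t = zadeh_ext f (fuzzy_prod u) y"
  define S where "S = {fuzzy_prod u z | z. f z = y}"
  have yr: "y \<in> range f" using pos unfolding zadeh_ext_def by (auto split: if_splits)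
  hence tS: "t = Sup S" unfolding t_def S_def zadeh_ext_def by simp
  have Sne: "S \<noteq> {}" using yr S_def by auto
  have Sbdd: "bdd_above S" unfolding S_def using prod_bounds[OF u] by (auto intro!: bdd_aboveI[of _ 1])
  have t0: "0 < t" using pos t_def by simp
  have "\<forall>k. \<exists>z. f z = y \<and> t - t / real (Suc (Suc k)) < fuzzy_prod u z"
  proof
    fix k
    have "t - t / real (Suc (Suc k)) < Sup S" using t0 tS by simp
    then obtain s where "s \<in> S" "t - t / real (Suc (Suc k)) < s"
      using less_cSup_iff[OF Sne Sbdd] by blast
    thus "\<exists>z. f z = y \<and> t - t / real (Suc (Suc k)) < fuzzy_prod u z" unfolding S_def by auto
  qed
  then obtain z where zy: "\<And>k. f (z k) = y" and zt: "\<And>k. t - t / real (Suc (Suc k)) < fuzzy_prod u (z k)"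
    by metis
  have zpos: "0 < fuzzy_prod u (z k)" for k
  proof -
    have "t / real (Suc (Suc k)) \<le> t / 2" using t0 by (intro divide_left_mono) auto
    thus ?thesis using zt[of k] t0 by linarith
  qed
  have zK: "z k i \<in> alpha_cut (u i) 0" for k i
  proof -
    have "0 < u i (z k i)" using zpos[of k] prod_le[of u "z k" i] by linarith
    thus ?thesis using in_supp by blast
  qed
  have cK: "\<forall>i. compact (alpha_cut (u i) 0)" using u FX_D(5) by blast
  have zK': "\<forall>k i. z k i \<in> alpha_cut (u i) 0" using zK by blast
  obtain r l where r: "strict_mono r" and l: "\<And>i. (\<lambda>k. z (r k) i) \<longlonglongrightarrow> l i"
    using subseq_prod[OF cK zK'] by blast
  have "(\<lambda>k. f (z (r k))) \<longlonglongrightarrow> f l" by (rule cont_m_lim[OF f l])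
  hence fl: "f l = y" using zy by (simp add: LIMSEQ_const_iff)
  have "t \<le> u i (l i)" for i
  proof (rule dense_le)
    fix a assume a: "a < t"
    obtain N :: nat where N: "t / (t - a) < real N" using reals_Archimedean2 by blast
    have ev: "\<forall>\<^sub>F k in sequentially. z (r k) i \<in> {x. a \<le> u i x}"
      unfolding eventually_sequentially
    proof (intro exI allI impI)
      fix k assume k: "N \<le> k"
      have "real N \<le> real (Suc (Suc (r k)))" using seq_suble[OF r, of k] k by simp
      hence "t / (t - a) < real (Suc (Suc (r k)))" using N by linarith
      hence "t < (t - a) * real (Suc (Suc (r k)))" using a by (simp add: divide_less_eq mult.commute)
      hence "t / real (Suc (Suc (r k))) < t - a" by (simp add: divide_less_eq)
      hence "a < fuzzy_prod u (z (r k))" using zt[of "r k"] by linarith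
      thus "z (r k) i \<in> {x. a \<le> u i x}" using prod_le[of u "z (r k)" i] by simp
    qed
    have "l i \<in> {x. a \<le> u i x}"
      by (rule Lim_in_closed_set[OF FX_D(4)[OF u[rule_format]] ev _ l]) simp
    thus "a \<le> u i (l i)" by simp
  qed
  hence "t \<le> fuzzy_prod u l" using prod_ge by blast
  moreover have "fuzzy_prod u l \<le> t" unfolding t_def
    using zadeh_upper[of "fuzzy_prod u" f l y] prod_bounds[OF u] fl by auto
  ultimately show ?thesis using fl t_def by force
qed



lemma infdist_bdd:
  assumes "B \<noteq> {}" "A \<union> B \<subseteq> C" "bounded C"
  shows "bdd_above ((\<lambda>a. infdist a B) ` A)"
proof (rule bdd_aboveI)
  fix r assume "r \<in> (\<lambda>a. infdist a B) ` A"
  then obtain a where a: "a \<in> A" "r = infdist a B" by auto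
  obtain b where b: "b \<in> B" using assms by auto
  have "infdist a B \<le> dist a b" by (rule infdist_le[OF b])
  also have "\<dots> \<le> diameter C" using assms a b by (intro diameter_bounded_bound) auto
  finally show "r \<le> diameter C" using a by simp
qed

lemma infdist_le_haus:
  assumes "a \<in> A" "B \<noteq> {}" "A \<union> B \<subseteq> C" "bounded C"
  shows "infdist a B \<le> hausdorff_dist A B"
  unfolding hausdorff_dist_def
  by (rule order_trans[OF cSUP_upper[OF assms(1) infdist_bdd[OF assms(2-4)]]]) simp

lemma haus_le_diam:
  assumes "A \<noteq> {}" "B \<noteq> {}" "A \<union> B \<subseteq> C" "bounded C"
  shows "hausdorff_dist A B \<le> diameter C"
proof -
  have 1: "infdist a B \<le> diameter C" if "a \<in> A" for a
  proof -
    obtain b where b: "b \<in> B" using assms by auto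
    have "infdist a B \<le> dist a b" by (rule infdist_le[OF b])
    also have "\<dots> \<le> diameter C" using assms that b by (intro diameter_bounded_bound) auto
    finally show ?thesis .
  qed
  have 2: "infdist b A \<le> diameter C" if "b \<in> B" for b
  proof -
    obtain a where a: "a \<in> A" using assms by auto
    have "infdist b A \<le> dist b a" by (rule infdist_le[OF a])
    also have "\<dots> \<le> diameter C" using assms that a by (intro diameter_bounded_bound) auto
    finally show ?thesis .
  qed
  show ?thesis unfolding hausdorff_dist_def
    using assms 1 2 by (auto intro!: cSUP_least)
qed

lemma haus_sym: "hausdorff_dist A B = hausdorff_dist B A"
  unfolding hausdorff_dist_def by (simp add: max.commute)

lemma d_inf_sym: "d_inf u v = d_inf v u"
  unfolding d_inf_def by (simp add: haus_sym)

lemma cuts_in: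
  assumes "0 \<le> \<alpha>" shows "alpha_cut u \<alpha> \<subseteq> alpha_cut u 0"
  using cut_sub[of \<alpha> u] assms by (cases "\<alpha> = 0") auto

lemma haus_le_d_inf:
  assumes u: "u \<in> FX_star" and v: "v \<in> FX_star" and b: "\<beta> \<in> {0..1}"
  shows "hausdorff_dist (alpha_cut u \<beta>) (alpha_cut v \<beta>) \<le> d_inf u v"
proof -
  let ?C = "alpha_cut u 0 \<union> alpha_cut v 0"
  have bC: "bounded ?C" using FX_D(5)[OF u] FX_D(5)[OF v] by (simp add: compact_imp_bounded)
  have "bdd_above ((\<lambda>\<alpha>. hausdorff_dist (alpha_cut u \<alpha>) (alpha_cut v \<alpha>)) ` {0..1})"
  proof (rule bdd_aboveI)
    fix r assume "r \<in> (\<lambda>\<alpha>. hausdorff_dist (alpha_cut u \<alpha>) (alpha_cut v \<alpha>)) ` {0..1}"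
    then obtain \<alpha> where a: "\<alpha> \<in> {0..1}" "r = hausdorff_dist (alpha_cut u \<alpha>) (alpha_cut v \<alpha>)" by auto
    show "r \<le> diameter ?C" unfolding a(2)
      by (rule haus_le_diam[OF cut_nonempty[OF u] cut_nonempty[OF v] _ bC])
         (use a(1) cuts_in[of \<alpha> u] cuts_in[of \<alpha> v] in auto)
  qed
  thus ?thesis unfolding d_inf_def by (rule cSUP_upper[OF b])
qed

lemma d_inf_le_m: "d_inf (u i) (v i) \<le> d_inf_m u v"
  unfolding d_inf_m_def by (rule Max_ge) auto

lemma rho_thresh:
  fixes \<rho> :: "nat \<Rightarrow> real \<Rightarrow> real" and a :: real
  assumes adm: "admissible n \<rho>" and j: "j < n" and a: "0 < a"
    and ex: "\<exists>t\<in>{0..1}. a \<le> \<rho> j t"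
  shows "\<exists>b::real. b \<in> {0<..1} \<and> (\<forall>t::real. t \<in> {0..1} \<longrightarrow> (a \<le> \<rho> j t \<longleftrightarrow> b \<le> t))"
proof -
  have mono: "mono_on {0..1} (\<rho> j)" and rc: "\<forall>t\<in>{0..<1}. (\<rho> j \<longlongrightarrow> \<rho> j t) (at_right t)"
    and r0: "\<rho> j 0 = 0"
    using adm j unfolding admissible_def by auto
  define S where "S = {t\<in>{0..1}. a \<le> \<rho> j t}"
  define b where "b = Inf S"
  have Sne: "S \<noteq> {}" using ex S_def by auto
  have Sbdd: "bdd_below S" unfolding S_def by (auto intro!: bdd_belowI[of _ 0])
  have bS: "b \<le> t" if "t \<in> S" for t unfolding b_def by (rule cInf_lower[OF that Sbdd])
  have b0: "0 \<le> b" unfolding b_def using Sne by (intro cInf_greatest) (auto simp: S_def)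
  have b1: "b \<le> 1" using Sne bS S_def by force
  have up: "t \<in> S" if tt: "t \<in> {0..1}" "b < t" for t :: real
  proof -
    obtain s where s: "s \<in> S" "s < t" using cInf_less_iff[OF Sne Sbdd] tt b_def by auto
    have "\<rho> j s \<le> \<rho> j t" using s that S_def by (intro mono_onD[OF mono]) auto
    thus ?thesis using s that S_def by auto
  qed
  have binS: "b \<in> S"
  proof (rule ccontr)
    assume nb: "b \<notin> S"
    have "b < 1"
    proof (rule ccontr)
      assume "\<not> b < 1" hence "b = 1" using b1 by simp
      moreover obtain s where "s \<in> S" using Sne by auto
      ultimately show False using nb bS S_def by force
    qed
    hence "(\<rho> j \<longlongrightarrow> \<rho> j b) (at_right b)" using rc b0 by auto
    moreover have "\<forall>\<^sub>F t in at_right b. a \<le> \<rho> j t"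
      using eventually_at_right_real[OF \<open>b < 1\<close>]
    proof eventually_elim
      case (elim t) thus ?case using up[of t] b0 S_def by auto
    qed
    ultimately have "a \<le> \<rho> j b" by (rule tendsto_lowerbound) simp
    thus False using nb b0 b1 S_def by auto
  qed
  have "b \<noteq> 0" using binS r0 a S_def by auto
  hence "b \<in> {0<..1}" using b0 b1 by auto
  moreover have "\<forall>t\<in>{0..1}. a \<le> \<rho> j t \<longleftrightarrow> b \<le> t"
  proof
    fix t :: real assume t: "t \<in> {0..1}"
    show "a \<le> \<rho> j t \<longleftrightarrow> b \<le> t"
    proof
      assume "a \<le> \<rho> j t" thus "b \<le> t" using bS t S_def by auto
    next
      assume "b \<le> t"
      thus "a \<le> \<rho> j t" using up[OF t] binS S_def by (cases "b = t") auto
    qed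
  qed
  ultimately show ?thesis by blast
qed



lemma cut0: "alpha_cut u 0 = closure {x. 0 < u x}"
  unfolding alpha_cut_def by simp

lemma adm_n: "admissible n \<rho> \<Longrightarrow> 0 < n"
  unfolding admissible_def by auto

lemma adm_D:
  assumes "admissible n \<rho>" "j < n"
  shows "\<And>t. t \<in> {0..1} \<Longrightarrow> 0 \<le> \<rho> j t" "\<And>t. t \<in> {0..1} \<Longrightarrow> \<rho> j t \<le> 1"
    "mono_on {0..1} (\<rho> j)" "\<rho> j 0 = 0"
  using assms unfolding admissible_def by auto

lemma T_bounds:
  assumes "\<forall>i. u i \<in> FX_star"
  shows "0 \<le> zadeh_ext f (fuzzy_prod u) y" "zadeh_ext f (fuzzy_prod u) y \<le> 1"
  using zadeh_bounds[of "fuzzy_prod u"] prod_bounds[OF assms] by auto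

lemma G_ge:
  assumes "admissible n \<rho>"
  shows "\<alpha> \<le> gifzs_op n \<phi> \<rho> u y \<longleftrightarrow> (\<exists>j<n. \<alpha> \<le> \<rho> j (zadeh_ext (\<phi> j) (fuzzy_prod u) y))"
  unfolding gifzs_op_def using adm_n[OF assms] by (subst Max_ge_iff) auto

lemma G_gt:
  assumes "admissible n \<rho>"
  shows "\<alpha> < gifzs_op n \<phi> \<rho> u y \<longleftrightarrow> (\<exists>j<n. \<alpha> < \<rho> j (zadeh_ext (\<phi> j) (fuzzy_prod u) y))"
  unfolding gifzs_op_def using adm_n[OF assms] by (subst Max_gr_iff) auto

lemma G_bounds:
  assumes adm: "admissible n \<rho>" and u: "\<forall>i. u i \<in> FX_star"
  shows "0 \<le> gifzs_op n \<phi> \<rho> u y" "gifzs_op n \<phi> \<rho> u y \<le> 1"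
proof -
  have n: "0 < n" using adm_n[OF adm] .
  have t: "zadeh_ext (\<phi> 0) (fuzzy_prod u) y \<in> {0..1}" using T_bounds[OF u, of "\<phi> 0" y] by simp
  have "0 \<le> \<rho> 0 (zadeh_ext (\<phi> 0) (fuzzy_prod u) y)"
    using adm_D(1)[OF adm n t] .
  thus "0 \<le> gifzs_op n \<phi> \<rho> u y" using G_ge[OF adm, of _ \<phi> u] n by blast
  show "gifzs_op n \<phi> \<rho> u y \<le> 1" unfolding gifzs_op_def using n
    by (subst Max_le_iff) (auto intro!: adm_D(2)[OF adm] simp: T_bounds[OF u])
qed

lemma T_cut:
  assumes u: "\<forall>i. u i \<in> FX_star" and f: "cont_m f" and b: "0 < b"
  shows "{y. b \<le> zadeh_ext f (fuzzy_prod u) y} = f ` {x. \<forall>i. x i \<in> alpha_cut (u i) b}"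
proof safe
  fix y assume y: "b \<le> zadeh_ext f (fuzzy_prod u) y"
  then obtain x where "f x = y" "fuzzy_prod u x = zadeh_ext f (fuzzy_prod u) y"
    using zadeh_attain[OF u f] b by force
  moreover have "\<forall>i. b \<le> u i (x i)"
    using y b prod_ge[of "zadeh_ext f (fuzzy_prod u) y" u x] calculation by (auto intro: order_trans)
  ultimately show "y \<in> f ` {x. \<forall>i. x i \<in> alpha_cut (u i) b}"
    using b by (auto simp: cut_pos)
next
  fix x assume "\<forall>i. x i \<in> alpha_cut (u i) b"
  hence "b \<le> fuzzy_prod u x" using b prod_ge by (auto simp: cut_pos)
  also have "\<dots> \<le> zadeh_ext f (fuzzy_prod u) (f x)"
    by (rule zadeh_upper) (use prod_bounds[OF u] in auto)
  finally show "b \<le> zadeh_ext f (fuzzy_prod u) (f x)" .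
qed

lemma G_FX:
  fixes \<phi> :: "nat \<Rightarrow> ('m::finite \<Rightarrow> 'a::metric_space) \<Rightarrow> 'a"
  assumes adm: "admissible n \<rho>" and cont: "\<forall>j<n. cont_m (\<phi> j)" and u: "\<forall>i. u i \<in> FX_star"
  shows "gifzs_op n \<phi> \<rho> u \<in> FX_star"
proof -
  let ?G = "gifzs_op n \<phi> \<rho> u"
  let ?T = "\<lambda>j. zadeh_ext (\<phi> j) (fuzzy_prod u)"
  have fs: "fuzzy_set ?G" unfolding fuzzy_set_def using G_bounds[OF adm u] by auto
  obtain j0 where j0: "j0 < n" "\<rho> j0 1 = 1" using adm unfolding admissible_def by auto
  have "\<forall>i. \<exists>z. u i z = 1" using u FX_D(3) by blast
  then obtain x where x: "\<And>i. u i (x i) = 1" by metis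
  have "1 \<le> fuzzy_prod u x" using prod_ge[of 1 u x] x by simp
  also have "\<dots> \<le> ?T j0 (\<phi> j0 x)" by (rule zadeh_upper) (use prod_bounds[OF u] in auto)
  finally have "?T j0 (\<phi> j0 x) = 1" using T_bounds[OF u, of "\<phi> j0" "\<phi> j0 x"] by (simp add: order_antisym)
  hence "1 \<le> ?G (\<phi> j0 x)" using G_ge[OF adm, of 1 \<phi> u "\<phi> j0 x"] j0 by auto
  hence norm: "\<exists>y. ?G y = 1" using G_bounds[OF adm u] by (meson order_antisym)
  have usc: "usc ?G" unfolding usc_def
  proof
    fix a :: real
    show "closed {y. a \<le> ?G y}"
    proof (cases "a \<le> 0")
      case True
      hence "{y. a \<le> ?G y} = UNIV" using G_bounds[OF adm u] by (auto intro: order_trans)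
      thus ?thesis by simp
    next
      case False
      hence a: "0 < a" by simp
      have eq: "{y. a \<le> ?G y} = (\<Union>j\<in>{..<n}. {y. a \<le> \<rho> j (?T j y)})"
        using G_ge[OF adm, of _ \<phi> u] by auto
      have "closed {y. a \<le> \<rho> j (?T j y)}" if j: "j < n" for j
      proof (cases "\<exists>t\<in>{0..1}. a \<le> \<rho> j t")
        case True
        then obtain b where b: "b \<in> {0<..1}" "\<forall>t\<in>{0..1}. a \<le> \<rho> j t \<longleftrightarrow> b \<le> t"
          using rho_thresh[OF adm j a] by blast
        have "{y. a \<le> \<rho> j (?T j y)} = {y. b \<le> ?T j y}"
          using b(2) T_bounds[OF u, of "\<phi> j"] by auto
        also have "\<dots> = \<phi> j ` {x. \<forall>i. x i \<in> alpha_cut (u i) b}"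
          by (rule T_cut[OF u]) (use cont j b in auto)
        moreover have "compact (\<phi> j ` {x. \<forall>i. x i \<in> alpha_cut (u i) b})"
          by (rule compact_img) (use cont j u b in \<open>auto intro!: cut_compact\<close>)
        ultimately show ?thesis by (simp add: compact_imp_closed)
      next
        case False
        hence "{y. a \<le> \<rho> j (?T j y)} = {}" using T_bounds[OF u, of "\<phi> j"] by force
        thus ?thesis by simp
      qed
      thus ?thesis unfolding eq by (intro closed_UN) auto
    qed
  qed
  let ?C = "\<Union>j\<in>{..<n}. \<phi> j ` {x. \<forall>i. x i \<in> alpha_cut (u i) 0}"
  have cC: "compact ?C"
    by (intro compact_UN compact_img) (use cont u in \<open>auto intro: FX_D(5)\<close>)
  have sub: "{y. 0 < ?G y} \<subseteq> ?C"
  proof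
    fix y assume "y \<in> {y. 0 < ?G y}"
    then obtain j where j: "j < n" "0 < \<rho> j (?T j y)" using G_gt[OF adm, of _ \<phi> u] by auto
    have "?T j y \<noteq> 0" using j adm_D(4)[OF adm j(1)] by auto
    hence pos: "0 < ?T j y" using T_bounds[OF u, of "\<phi> j" y] by (simp add: order_le_less)
    then obtain x where x: "\<phi> j x = y" "fuzzy_prod u x = ?T j y"
      using zadeh_attain[OF u] cont j by blast
    have "\<forall>i. x i \<in> alpha_cut (u i) 0"
      using x pos prod_le[of u x] in_supp by (metis less_le_trans)
    thus "y \<in> ?C" using x j by blast
  qed
  have "alpha_cut ?G 0 \<subseteq> ?C" unfolding cut0[of ?G]
    by (rule closure_minimal[OF sub compact_imp_closed[OF cC]])
  hence "alpha_cut ?G 0 = ?C \<inter> alpha_cut ?G 0" by blast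
  hence "compact (alpha_cut ?G 0)"
    using compact_Int_closed[OF cC, of "alpha_cut ?G 0"] unfolding cut0[of ?G] by simp
  thus ?thesis unfolding FX_star_def using fs norm usc by blast
qed



lemma PT:
  fixes \<phi> :: "nat \<Rightarrow> ('m::finite \<Rightarrow> 'a::metric_space) \<Rightarrow> 'a" and \<psi> :: "nat \<Rightarrow> real \<Rightarrow> real"
  assumes adm: "admissible n \<rho>" and cont: "\<forall>j<n. cont_m (\<phi> j)"
    and u: "\<forall>i. u i \<in> FX_star" and v: "\<forall>i. v i \<in> FX_star"
    and mono: "\<forall>j<n. mono_on {0..} (\<psi> j)"
    and lip: "\<forall>j<n. \<forall>x y. dist (\<phi> j x) (\<phi> j y) \<le> \<psi> j (d_m x y)"
    and D: "\<forall>i. d_inf (u i) (v i) \<le> D" and c: "\<forall>j<n. \<psi> j D \<le> c"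
    and a: "0 < \<alpha>" "\<alpha> \<le> gifzs_op n \<phi> \<rho> u y"
  shows "infdist y (alpha_cut (gifzs_op n \<phi> \<rho> v) \<alpha>) \<le> c"
proof -
  obtain j where j: "j < n" "\<alpha> \<le> \<rho> j (zadeh_ext (\<phi> j) (fuzzy_prod u) y)"
    using a G_ge[OF adm, of \<alpha> \<phi> u y] by auto
  define \<beta> where "\<beta> = zadeh_ext (\<phi> j) (fuzzy_prod u) y"
  have b01: "0 \<le> \<beta>" "\<beta> \<le> 1" using T_bounds[OF u, of "\<phi> j" y] \<beta>_def by auto
  have "\<beta> \<noteq> 0" using j a adm_D(4)[OF adm j(1)] \<beta>_def by auto
  hence bpos: "0 < \<beta>" using b01 by simp
  obtain x where x: "\<phi> j x = y" "fuzzy_prod u x = \<beta>"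
    using zadeh_attain[OF u _ bpos[unfolded \<beta>_def]] cont j \<beta>_def by blast
  have xi: "\<beta> \<le> u i (x i)" for i using x prod_ge[of \<beta> u x] by simp
  have "\<forall>i. \<exists>z. \<beta> \<le> v i z \<and> dist (x i) z \<le> D"
  proof
    fix i
    let ?Au = "alpha_cut (u i) \<beta>" and ?Av = "alpha_cut (v i) \<beta>"
    have uiF: "u i \<in> FX_star" and viF: "v i \<in> FX_star" using u v by auto
    have cAv: "compact ?Av" using cut_compact[OF viF] b01 by simp
    have neAv: "?Av \<noteq> {}" using cut_nonempty[OF viF] b01 by simp
    obtain z where z1: "z \<in> ?Av" and zmin: "\<forall>w\<in>?Av. dist (x i) z \<le> dist (x i) w"
    proof -
      have "continuous_on ?Av (\<lambda>w. dist (x i) w)" by (intro continuous_intros)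
      from continuous_attains_inf[OF cAv neAv this] that show ?thesis by blast
    qed
    have "dist (x i) z \<le> infdist (x i) ?Av"
      unfolding infdist_def using neAv zmin by (auto intro!: cINF_greatest)
    hence z: "z \<in> ?Av" "dist (x i) z \<le> infdist (x i) ?Av" using z1 by auto
    have xAu: "x i \<in> ?Au" using xi bpos by (simp add: cut_pos)
    have bC: "bounded (alpha_cut (u i) 0 \<union> alpha_cut (v i) 0)"
      using FX_D(5)[OF uiF] FX_D(5)[OF viF] by (simp add: compact_imp_bounded)
    have "infdist (x i) ?Av \<le> hausdorff_dist ?Au ?Av"
      by (rule infdist_le_haus[OF xAu neAv _ bC]) (use cuts_in[of \<beta> "u i"] cuts_in[of \<beta> "v i"] b01 in auto)
    also have "\<dots> \<le> d_inf (u i) (v i)" by (rule haus_le_d_inf[OF uiF viF]) (use b01 in auto)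
    also have "\<dots> \<le> D" using D by auto
    finally show "\<exists>z. \<beta> \<le> v i z \<and> dist (x i) z \<le> D" using z bpos by (auto simp: cut_pos intro: order_trans)
  qed
  then obtain z :: "'m \<Rightarrow> 'a" where z: "\<And>i. \<beta> \<le> v i (z i)" "\<And>i. dist (x i) (z i) \<le> D"
    by metis
  have dm: "d_m x z \<le> D" using z(2) d_m_le by blast
  have D0: "0 \<le> D" using d_m_nonneg[of x z] dm by linarith
  have "dist y (\<phi> j z) \<le> \<psi> j (d_m x z)" using lip j x by auto
  also have "\<dots> \<le> \<psi> j D" using mono j dm D0 d_m_nonneg[of x z] by (auto intro: mono_onD)
  also have "\<dots> \<le> c" using c j by auto
  finally have dist: "dist y (\<phi> j z) \<le> c" .
  have "\<beta> \<le> fuzzy_prod v z" using z(1) prod_ge by blast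
  also have "\<dots> \<le> zadeh_ext (\<phi> j) (fuzzy_prod v) (\<phi> j z)"
    by (rule zadeh_upper) (use prod_bounds[OF v] in auto)
  finally have bT: "\<beta> \<le> zadeh_ext (\<phi> j) (fuzzy_prod v) (\<phi> j z)" .
  have "\<rho> j \<beta> \<le> \<rho> j (zadeh_ext (\<phi> j) (fuzzy_prod v) (\<phi> j z))"
    by (rule mono_onD[OF adm_D(3)[OF adm j(1)]]) (use b01 bT T_bounds[OF v, of "\<phi> j" "\<phi> j z"] in auto)
  hence "\<alpha> \<le> \<rho> j (zadeh_ext (\<phi> j) (fuzzy_prod v) (\<phi> j z))" using j \<beta>_def by auto
  hence "\<alpha> \<le> gifzs_op n \<phi> \<rho> v (\<phi> j z)" using G_ge[OF adm, of \<alpha> \<phi> v "\<phi> j z"] j by auto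
  hence "\<phi> j z \<in> alpha_cut (gifzs_op n \<phi> \<rho> v) \<alpha>" using a by (simp add: cut_pos)
  hence "infdist y (alpha_cut (gifzs_op n \<phi> \<rho> v) \<alpha>) \<le> dist y (\<phi> j z)" by (rule infdist_le)
  thus ?thesis using dist by linarith
qed



lemma d_inf_nonneg:
  assumes u: "u \<in> FX_star" and v: "v \<in> FX_star"
  shows "0 \<le> d_inf u v"
proof -
  obtain a where a: "a \<in> alpha_cut u 1" using cut_nonempty[OF u, of 1] by auto
  have bC: "bounded (alpha_cut u 0 \<union> alpha_cut v 0)"
    using FX_D(5)[OF u] FX_D(5)[OF v] by (simp add: compact_imp_bounded)
  have "0 \<le> infdist a (alpha_cut v 1)" by (rule infdist_nonneg)
  also have "\<dots> \<le> hausdorff_dist (alpha_cut u 1) (alpha_cut v 1)"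
    by (rule infdist_le_haus[OF a cut_nonempty[OF v] _ bC])
       (use cuts_in[of 1 u] cuts_in[of 1 v] in auto)
  also have "\<dots> \<le> d_inf u v" by (rule haus_le_d_inf[OF u v]) auto
  finally show ?thesis .
qed

lemma cl_infdist:
  assumes W: "W \<in> FX_star" and w1: "\<And>z. w z \<le> 1"
    and H: "\<And>\<alpha> z. 0 < \<alpha> \<Longrightarrow> \<alpha> \<le> w z \<Longrightarrow> infdist z (alpha_cut W \<alpha>) \<le> c"
    and y: "y \<in> closure {z. 0 < w z}"
  shows "infdist y (alpha_cut W 0) \<le> c"
proof (rule field_le_epsilon)
  fix e :: real assume e: "0 < e"
  obtain y' where y': "0 < w y'" "dist y' y < e" using y e unfolding closure_approachable by auto
  have "infdist y' (alpha_cut W (w y')) \<le> c" using H[OF y'(1)] by simp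
  moreover have "infdist y' (alpha_cut W 0) \<le> infdist y' (alpha_cut W (w y'))"
    by (rule infdist_mono[OF cut_sub[OF y'(1)] cut_nonempty[OF W]]) (use y'(1) w1 in auto)
  moreover have "infdist y (alpha_cut W 0) \<le> infdist y' (alpha_cut W 0) + dist y y'"
    by (rule infdist_triangle)
  ultimately show "infdist y (alpha_cut W 0) \<le> c + e" using y'(2) by (simp add: dist_commute)
qed

lemma dist_G:
  fixes \<phi> :: "nat \<Rightarrow> ('m::finite \<Rightarrow> 'a::metric_space) \<Rightarrow> 'a" and \<psi> :: "nat \<Rightarrow> real \<Rightarrow> real"
  assumes adm: "admissible n \<rho>" and cont: "\<forall>j<n. cont_m (\<phi> j)"
    and u: "\<forall>i. u i \<in> FX_star" and v: "\<forall>i. v i \<in> FX_star"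
    and mono: "\<forall>j<n. mono_on {0..} (\<psi> j)"
    and lip: "\<forall>j<n. \<forall>x y. dist (\<phi> j x) (\<phi> j y) \<le> \<psi> j (d_m x y)"
    and c: "\<forall>j<n. \<psi> j (d_inf_m u v) \<le> c"
  shows "d_inf (gifzs_op n \<phi> \<rho> u) (gifzs_op n \<phi> \<rho> v) \<le> c"
proof -
  let ?Gu = "gifzs_op n \<phi> \<rho> u" and ?Gv = "gifzs_op n \<phi> \<rho> v"
  have Du: "\<forall>i. d_inf (u i) (v i) \<le> d_inf_m u v" using d_inf_le_m by blast
  have Dv: "\<forall>i. d_inf (v i) (u i) \<le> d_inf_m u v" using d_inf_le_m d_inf_sym by metis
  have PTu: "infdist y (alpha_cut ?Gv \<alpha>) \<le> c" if "0 < \<alpha>" "\<alpha> \<le> ?Gu y" for \<alpha> y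
    by (rule PT[OF adm cont u v mono lip Du c that])
  have PTv: "infdist y (alpha_cut ?Gu \<alpha>) \<le> c" if "0 < \<alpha>" "\<alpha> \<le> ?Gv y" for \<alpha> y
    by (rule PT[OF adm cont v u mono lip Dv c that])
  have GuF: "?Gu \<in> FX_star" by (rule G_FX[OF adm cont u])
  have GvF: "?Gv \<in> FX_star" by (rule G_FX[OF adm cont v])
  have H: "hausdorff_dist (alpha_cut ?Gu \<alpha>) (alpha_cut ?Gv \<alpha>) \<le> c" if a: "\<alpha> \<in> {0..1}" for \<alpha>
  proof (cases "\<alpha> = 0")
    case True
    have 1: "infdist y (alpha_cut ?Gv 0) \<le> c" if "y \<in> alpha_cut ?Gu 0" for y
      by (rule cl_infdist[OF GvF G_bounds(2)[OF adm u] PTu]) (use that in \<open>auto simp: cut0\<close>)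
    have 2: "infdist y (alpha_cut ?Gu 0) \<le> c" if "y \<in> alpha_cut ?Gv 0" for y
      by (rule cl_infdist[OF GuF G_bounds(2)[OF adm v] PTv]) (use that in \<open>auto simp: cut0\<close>)
    show ?thesis unfolding hausdorff_dist_def True
      using 1 2 cut_nonempty[OF GuF, of 0] cut_nonempty[OF GvF, of 0]
      by (auto intro!: cSUP_least)
  next
    case False
    hence a0: "0 < \<alpha>" using a by simp
    have 1: "infdist y (alpha_cut ?Gv \<alpha>) \<le> c" if "y \<in> alpha_cut ?Gu \<alpha>" for y
      using PTu[OF a0] that False by (simp add: cut_pos)
    have 2: "infdist y (alpha_cut ?Gu \<alpha>) \<le> c" if "y \<in> alpha_cut ?Gv \<alpha>" for y
      using PTv[OF a0] that False by (simp add: cut_pos)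
    show ?thesis unfolding hausdorff_dist_def
      using 1 2 cut_nonempty[OF GuF, of \<alpha>] cut_nonempty[OF GvF, of \<alpha>] a
      by (auto intro!: cSUP_least)
  qed
  show ?thesis unfolding d_inf_def using H by (auto intro!: cSUP_least)
qed



lemma mk_lt:
  assumes m: "matkowski_fun \<psi>" and t: "0 < t"
  shows "\<psi> t < t"
proof (rule ccontr)
  assume "\<not> \<psi> t < t" hence ge: "t \<le> \<psi> t" by simp
  have mono: "mono_on {0..} \<psi>" and lim: "(\<lambda>k. (\<psi> ^^ k) t) \<longlonglongrightarrow> 0"
    using m t unfolding matkowski_fun_def by auto
  have "t \<le> (\<psi> ^^ k) t" for k
  proof (induction k)
    case 0 show ?case by simp
  next
    case (Suc k)
    have "\<psi> t \<le> \<psi> ((\<psi> ^^ k) t)" by (rule mono_onD[OF mono]) (use Suc t in auto)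
    thus ?case using ge by simp
  qed
  hence "t \<le> 0" using LIMSEQ_le_const[OF lim] by blast
  thus False using t by simp
qed

lemma mk_gap:
  assumes m: "matkowski_fun \<psi>" and L: "0 < L"
  shows "\<exists>s>L. \<psi> s \<le> L"
proof (rule ccontr)
  assume "\<not> (\<exists>s>L. \<psi> s \<le> L)" hence gt: "\<And>s. L < s \<Longrightarrow> L < \<psi> s" by force
  have lim: "(\<lambda>k. (\<psi> ^^ k) (L + 1)) \<longlonglongrightarrow> 0"
    using m L unfolding matkowski_fun_def by auto
  have "L < (\<psi> ^^ k) (L + 1)" for k
    by (induction k) (auto intro: gt)
  hence "L \<le> 0" using LIMSEQ_le_const[OF lim] less_imp_le by blast
  thus False using L by simp
qed

lemma mk_from:
  fixes \<Phi> :: "real \<Rightarrow> real"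
  assumes mono: "mono_on {0..} \<Phi>" and nn: "\<forall>t\<ge>0. 0 \<le> \<Phi> t" and lt: "\<forall>t>0. \<Phi> t < t"
    and gap: "\<forall>L>0. \<exists>s>L. \<Phi> s \<le> L"
  shows "matkowski_fun \<Phi>"
  unfolding matkowski_fun_def
proof (intro conjI allI impI)
  show "mono_on {0..} \<Phi>" by fact
  show "\<And>t. 0 \<le> t \<Longrightarrow> 0 \<le> \<Phi> t" using nn by auto
  fix t :: real assume t: "0 < t"
  have P0: "\<Phi> 0 \<le> 0"
  proof (rule field_le_epsilon)
    fix e :: real assume e: "0 < e"
    have "\<Phi> 0 \<le> \<Phi> e" by (rule mono_onD[OF mono]) (use e in auto)
    also have "\<dots> < e" using lt e by auto
    finally show "\<Phi> 0 \<le> 0 + e" by simp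
  qed
  define a where "a k = (\<Phi> ^^ k) t" for k
  have aS: "a (Suc k) = \<Phi> (a k)" for k unfolding a_def by simp
  have a0: "0 \<le> a k" for k
    by (induction k) (use t nn in \<open>auto simp: a_def\<close>)
  have dec: "a (Suc k) \<le> a k" for k
  proof (cases "a k = 0")
    case True thus ?thesis using aS P0 by simp
  next
    case False thus ?thesis using aS lt a0[of k] by (simp add: less_imp_le order_le_less)
  qed
  have "decseq a" by (rule decseq_SucI) (rule dec)
  then obtain L where L: "a \<longlonglongrightarrow> L" "\<forall>i. L \<le> a i"
    using decseq_convergent[of a 0] a0 by (metis antimono_def)
  have L0: "0 \<le> L" using LIMSEQ_le_const[OF L(1)] a0 by blast
  have "L = 0"
  proof (rule ccontr)
    assume "L \<noteq> 0" hence Lp: "0 < L" using L0 by simp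
    obtain s where s: "L < s" "\<Phi> s \<le> L" using gap Lp by blast
    have "\<forall>\<^sub>F k in sequentially. a k < s" using order_tendstoD(2)[OF L(1) s(1)] .
    then obtain k where k: "a k < s" by (auto simp: eventually_sequentially)
    have "a (Suc k) \<le> \<Phi> s" unfolding aS by (rule mono_onD[OF mono]) (use k a0[of k] in auto)
    hence "a (Suc k) = L" using s L(2)[rule_format, of "Suc k"] by simp
    hence "a (Suc (Suc k)) < L" using aS lt Lp by simp
    thus False using L(2) by (meson not_le)
  qed
  thus "(\<lambda>k. (\<Phi> ^^ k) t) \<longlonglongrightarrow> 0" using L(1) unfolding a_def by simp
qed

lemma mk_max:
  fixes \<psi> :: "nat \<Rightarrow> real \<Rightarrow> real"
  assumes n: "0 < n" and m: "\<forall>j<n. matkowski_fun (\<psi> j)"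
  shows "matkowski_fun (\<lambda>t. Max ((\<lambda>j. \<psi> j t) ` {..<n}))"
proof (rule mk_from)
  have ne: "{..<n} \<noteq> {}" using n by auto
  have mono: "mono_on {0..} (\<psi> j)" if "j < n" for j using m that unfolding matkowski_fun_def by auto
  show "mono_on {0..} (\<lambda>t. Max ((\<lambda>j. \<psi> j t) ` {..<n}))"
  proof (rule mono_onI)
    fix r s :: real assume rs: "r \<in> {0..}" "s \<in> {0..}" "r \<le> s"
    show "Max ((\<lambda>j. \<psi> j r) ` {..<n}) \<le> Max ((\<lambda>j. \<psi> j s) ` {..<n})"
    proof (subst Max_le_iff, simp, use ne in simp, intro ballI)
      fix x assume "x \<in> (\<lambda>j. \<psi> j r) ` {..<n}"
      then obtain j where j: "j < n" "x = \<psi> j r" by auto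
      have "\<psi> j r \<le> \<psi> j s" by (rule mono_onD[OF mono[OF j(1)] rs])
      also have "\<dots> \<le> Max ((\<lambda>j. \<psi> j s) ` {..<n})" by (rule Max_ge) (use j in auto)
      finally show "x \<le> Max ((\<lambda>j. \<psi> j s) ` {..<n})" using j by simp
    qed
  qed
  show "\<forall>t\<ge>0. 0 \<le> Max ((\<lambda>j. \<psi> j t) ` {..<n})"
  proof (intro allI impI)
    fix t :: real assume t: "0 \<le> t"
    have "0 \<le> \<psi> 0 t" using m n t unfolding matkowski_fun_def by auto
    also have "\<dots> \<le> Max ((\<lambda>j. \<psi> j t) ` {..<n})" by (rule Max_ge) (use n in auto)
    finally show "0 \<le> Max ((\<lambda>j. \<psi> j t) ` {..<n})" .
  qed
  show "\<forall>t>0. Max ((\<lambda>j. \<psi> j t) ` {..<n}) < t"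
    using ne m mk_lt by (auto simp: Max_less_iff)
  show "\<forall>L>0. \<exists>s>L. Max ((\<lambda>j. \<psi> j s) ` {..<n}) \<le> L"
  proof (intro allI impI)
    fix L :: real assume L: "0 < L"
    have "\<forall>j. \<exists>s. j < n \<longrightarrow> L < s \<and> \<psi> j s \<le> L" using mk_gap m L by blast
    then obtain sf where sf: "\<And>j. j < n \<Longrightarrow> L < sf j \<and> \<psi> j (sf j) \<le> L" by metis
    define s where "s = Min (sf ` {..<n})"
    have sL: "L < s" unfolding s_def using ne sf by (subst Min_gr_iff) auto
    have "\<psi> j s \<le> L" if j: "j < n" for j
    proof -
      have "s \<le> sf j" unfolding s_def by (rule Min_le) (use j in auto)
      hence "\<psi> j s \<le> \<psi> j (sf j)" by (intro mono_onD[OF mono[OF j]]) (use sL L in auto)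
      thus ?thesis using sf[OF j] by simp
    qed
    hence "Max ((\<lambda>j. \<psi> j s) ` {..<n}) \<le> L" using ne by (subst Max_le_iff) auto
    thus "\<exists>s>L. Max ((\<lambda>j. \<psi> j s) ` {..<n}) \<le> L" using sL by blast
  qed
qed

lemma lip_bound:
  assumes "lipschitz_m f"
  shows "0 \<le> Lip_m f" "dist (f x) (f y) \<le> Lip_m f * d_m x y"
proof -
  define S where "S = {L. 0 \<le> L \<and> (\<forall>x y. dist (f x) (f y) \<le> L * d_m x y)}"
  have ne: "S \<noteq> {}" using assms unfolding lipschitz_m_def S_def by auto
  have Lip: "Lip_m f = Inf S" unfolding Lip_m_def S_def by simp
  show "0 \<le> Lip_m f" unfolding Lip using ne by (intro cInf_greatest) (auto simp: S_def)
  show "dist (f x) (f y) \<le> Lip_m f * d_m x y"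
  proof (cases "d_m x y = 0")
    case True
    obtain L where "L \<in> S" using ne by auto
    hence "dist (f x) (f y) \<le> L * d_m x y" unfolding S_def by auto
    thus ?thesis using True by simp
  next
    case False
    hence dp: "0 < d_m x y" using d_m_nonneg[of x y] by simp
    have "dist (f x) (f y) / d_m x y \<le> Inf S"
      using ne dp by (intro cInf_greatest) (auto simp: S_def divide_le_eq)
    thus ?thesis using dp Lip by (simp add: divide_le_eq)
  qed
qed



theorem mainTheorem11:
  fixes n :: nat
    and \<phi> :: "nat \<Rightarrow> ('m::finite \<Rightarrow> 'a::metric_space) \<Rightarrow> 'a"
    and \<rho> :: "nat \<Rightarrow> real \<Rightarrow> real"
    and \<psi> :: "nat \<Rightarrow> real \<Rightarrow> real"
  assumes cont: "\<forall>j<n. cont_m (\<phi> j)"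
    and adm: "admissible n \<rho>"
  shows
    "((\<forall>j<n. matkowski_witness_m (\<psi> j) (\<phi> j)) \<longrightarrow>
        matkowski_fun (\<lambda>t. Max ((\<lambda>j. \<psi> j t) ` {..<n})) \<and>
        (\<forall>u v. (\<forall>i. u i \<in> FX_star) \<and> (\<forall>i. v i \<in> FX_star) \<longrightarrow>
           gifzs_op n \<phi> \<rho> u \<in> FX_star \<and>
           d_inf (gifzs_op n \<phi> \<rho> u) (gifzs_op n \<phi> \<rho> v)
             \<le> Max ((\<lambda>j. \<psi> j (d_inf_m u v)) ` {..<n})))
     \<and>
     ((\<forall>j<n. lipschitz_m (\<phi> j) \<and> Lip_m (\<phi> j) < 1) \<longrightarrow>
        Max ((\<lambda>j. Lip_m (\<phi> j)) ` {..<n}) < 1 \<and>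
        (\<forall>u v. (\<forall>i. u i \<in> FX_star) \<and> (\<forall>i. v i \<in> FX_star) \<longrightarrow>
           d_inf (gifzs_op n \<phi> \<rho> u) (gifzs_op n \<phi> \<rho> v)
             \<le> Max ((\<lambda>j. Lip_m (\<phi> j)) ` {..<n}) * d_inf_m u v))"
proof (intro conjI impI allI)
  have n: "0 < n" by (rule adm_n[OF adm])
  have ne: "{..<n} \<noteq> {}" using n by auto
  {
    assume W: "\<forall>j<n. matkowski_witness_m (\<psi> j) (\<phi> j)"
    have mf: "\<forall>j<n. matkowski_fun (\<psi> j)" using W unfolding matkowski_witness_m_def by auto
    show "matkowski_fun (\<lambda>t. Max ((\<lambda>j. \<psi> j t) ` {..<n}))" by (rule mk_max[OF n mf])
    fix u v :: "'m \<Rightarrow> 'a \<Rightarrow> real"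
    assume uv: "(\<forall>i. u i \<in> FX_star) \<and> (\<forall>i. v i \<in> FX_star)"
    hence u: "\<forall>i. u i \<in> FX_star" and v: "\<forall>i. v i \<in> FX_star" by auto
    show "gifzs_op n \<phi> \<rho> u \<in> FX_star" by (rule G_FX[OF adm cont u])
    have mono: "\<forall>j<n. mono_on {0..} (\<psi> j)" using mf unfolding matkowski_fun_def by auto
    have lip: "\<forall>j<n. \<forall>x y. dist (\<phi> j x) (\<phi> j y) \<le> \<psi> j (d_m x y)"
      using W unfolding matkowski_witness_m_def by auto
    show "d_inf (gifzs_op n \<phi> \<rho> u) (gifzs_op n \<phi> \<rho> v) \<le> Max ((\<lambda>j. \<psi> j (d_inf_m u v)) ` {..<n})"
      by (rule dist_G[OF adm cont u v mono lip]) (auto intro: Max_ge)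
  }
  {
    assume L: "\<forall>j<n. lipschitz_m (\<phi> j) \<and> Lip_m (\<phi> j) < 1"
    show "Max ((\<lambda>j. Lip_m (\<phi> j)) ` {..<n}) < 1" using L ne by (subst Max_less_iff) auto
    fix u v :: "'m \<Rightarrow> 'a \<Rightarrow> real"
    assume uv: "(\<forall>i. u i \<in> FX_star) \<and> (\<forall>i. v i \<in> FX_star)"
    hence u: "\<forall>i. u i \<in> FX_star" and v: "\<forall>i. v i \<in> FX_star" by auto
    let ?M = "Max ((\<lambda>j. Lip_m (\<phi> j)) ` {..<n})"
    have mono: "\<forall>j<n. mono_on {0..} (\<lambda>t. Lip_m (\<phi> j) * t)"
      using L lip_bound(1) by (auto intro!: mono_onI mult_left_mono)
    have lip: "\<forall>j<n. \<forall>x y. dist (\<phi> j x) (\<phi> j y) \<le> Lip_m (\<phi> j) * d_m x y"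
      using L lip_bound(2) by blast
    have D0: "0 \<le> d_inf_m u v"
      using d_inf_nonneg[of "u undefined" "v undefined"] u v d_inf_le_m[of u undefined v] by auto
    have c: "\<forall>j<n. Lip_m (\<phi> j) * d_inf_m u v \<le> ?M * d_inf_m u v"
      using D0 by (auto intro!: mult_right_mono Max_ge)
    show "d_inf (gifzs_op n \<phi> \<rho> u) (gifzs_op n \<phi> \<rho> v) \<le> ?M * d_inf_m u v"
      by (rule dist_G[OF adm cont u v mono lip c])
  }
qed

end
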